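(* Let $\mathbb{K}\in\{\mathbb{R},\mathbb{C}\}$, let $X$ be a Hausdorff topological vector space over $\mathbb{K}$ whose topology is weak, and let $T:X\to X$ be a continuous linear operator. Then the following conditions are equivalent: (1) the dual operator $T'$ has no non-trivial finite dimensional invariant subspaces; (2) $T$ is transitive; (3) $T$ is mixing; (4) for any non-empty open subsets $U$ and $V$ of $X$, there is $k\in\mathbb{N}$ such that $p(T)(U)\cap V\neq\varnothing$ for every polynomial $p$ with coefficients in $\mathbb{K}$ of degree $\geq k$.
   Context: The topology $\tau$ of a topological vector space $X$ is called weak if there is a linear space $Y$ of linear functionals on $X$ separating the points of $X$ such that $\tau$ is exactly the weakest topology making every $f\in Y$ continuous. $X'$ denotes the space of continuous linear functionals on $X$, and the dual operator $T':X'\to X'$ is $(T'f)(x)=f(Tx)$. A non-trivial subspace means a subspace different from $\{0\}$; a subspace $L$ is invariant for $T'$ if $T'(L)\subseteq L$. $T$ is transitive if for any non-empty open $U,V\subseteq X$ there is $n\in\mathbb{N}$ with $T^n(U)\cap V\neq\varnothing$. $T$ is mixing if for any non-empty open $U,V\subseteq X$ there is $n\in\mathbb{N}$ such that $T^m(U)\cap V\neq\varnothing$ for every $m\geq n$. *)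

theory Defs
  imports "HOL-Analysis.Analysis" "HOL-Computational_Algebra.Polynomial"
begin

text \<open>Setting: a vector space X (a type 'v) over a scalar field 'k (instantiated to
  real and to complex in the main theorem), with scalar multiplication sc,
  and a topology tau on X.\<close>

definition Hausdorff_tvs :: "('k::real_normed_field \<Rightarrow> 'v::ab_group_add \<Rightarrow> 'v) \<Rightarrow> 'v topology \<Rightarrow> bool" where
  "Hausdorff_tvs sc tau \<longleftrightarrow>
     vector_space sc \<and> topspace tau = UNIV \<and> Hausdorff_space tau \<and>
     continuous_map (prod_topology tau tau) tau (\<lambda>(x, y). x + y) \<and>
     continuous_map (prod_topology (euclidean :: 'k topology) tau) tau (\<lambda>(c, x). sc c x)"

definition linear_space_of_functionals ::
  "('k::real_normed_field \<Rightarrow> 'v::ab_group_add \<Rightarrow> 'v) \<Rightarrow> ('v \<Rightarrow> 'k) set \<Rightarrow> bool" where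
  "linear_space_of_functionals sc Y \<longleftrightarrow>
     (\<forall>f\<in>Y. Vector_Spaces.linear sc (*) f) \<and> (\<lambda>x. 0) \<in> Y \<and>
     (\<forall>f\<in>Y. \<forall>g\<in>Y. (\<lambda>x. f x + g x) \<in> Y) \<and>
     (\<forall>c. \<forall>f\<in>Y. (\<lambda>x. c * f x) \<in> Y)"

definition separates_points :: "('v \<Rightarrow> 'k) set \<Rightarrow> bool" where
  "separates_points Y \<longleftrightarrow> (\<forall>x y. x \<noteq> y \<longrightarrow> (\<exists>f\<in>Y. f x \<noteq> f y))"

definition is_weakest_topology_for :: "('v \<Rightarrow> 'k::real_normed_field) set \<Rightarrow> 'v topology \<Rightarrow> bool" where
  "is_weakest_topology_for Y tau \<longleftrightarrow>
     topspace tau = UNIV \<and> (\<forall>f\<in>Y. continuous_map tau euclidean f) \<and>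
     (\<forall>sigma :: 'v topology. topspace sigma = UNIV \<and> (\<forall>f\<in>Y. continuous_map sigma euclidean f)
        \<longrightarrow> (\<forall>S. openin tau S \<longrightarrow> openin sigma S))"

definition weak_topology :: "('k::real_normed_field \<Rightarrow> 'v::ab_group_add \<Rightarrow> 'v) \<Rightarrow> 'v topology \<Rightarrow> bool" where
  "weak_topology sc tau \<longleftrightarrow>
     (\<exists>Y. linear_space_of_functionals sc Y \<and> separates_points Y \<and> is_weakest_topology_for Y tau)"

definition dual_space :: "('k::real_normed_field \<Rightarrow> 'v::ab_group_add \<Rightarrow> 'v) \<Rightarrow> 'v topology \<Rightarrow> ('v \<Rightarrow> 'k) set" where
  "dual_space sc tau = {f. Vector_Spaces.linear sc (*) f \<and> continuous_map tau euclidean f}"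

definition dual_op :: "('v \<Rightarrow> 'v) \<Rightarrow> ('v \<Rightarrow> 'k) \<Rightarrow> ('v \<Rightarrow> 'k)" where
  "dual_op T f = (\<lambda>x. f (T x))"

definition is_subspace_of :: "('v \<Rightarrow> 'k::real_normed_field) set \<Rightarrow> ('v \<Rightarrow> 'k) set \<Rightarrow> bool" where
  "is_subspace_of L D \<longleftrightarrow> L \<subseteq> D \<and> (\<lambda>x. 0) \<in> L \<and>
     (\<forall>f\<in>L. \<forall>g\<in>L. (\<lambda>x. f x + g x) \<in> L) \<and> (\<forall>c. \<forall>f\<in>L. (\<lambda>x. c * f x) \<in> L)"

definition finite_dimensional_fs :: "('v \<Rightarrow> 'k::real_normed_field) set \<Rightarrow> bool" where
  "finite_dimensional_fs L \<longleftrightarrow>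
     (\<exists>F. finite F \<and> F \<subseteq> L \<and> L = {(\<lambda>x. \<Sum>f\<in>F. c f * f x) | c. True})"

definition dual_has_no_nontrivial_fd_invariant_subspace ::
  "('k::real_normed_field \<Rightarrow> 'v::ab_group_add \<Rightarrow> 'v) \<Rightarrow> 'v topology \<Rightarrow> ('v \<Rightarrow> 'v) \<Rightarrow> bool" where
  "dual_has_no_nontrivial_fd_invariant_subspace sc tau T \<longleftrightarrow>
     \<not> (\<exists>L. is_subspace_of L (dual_space sc tau) \<and> L \<noteq> {\<lambda>x. 0} \<and>
            finite_dimensional_fs L \<and> dual_op T ` L \<subseteq> L)"

text \<open>Natural numbers N are taken to be {1,2,...}.\<close>
definition transitive_op :: "'v topology \<Rightarrow> ('v \<Rightarrow> 'v) \<Rightarrow> bool" where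
  "transitive_op tau T \<longleftrightarrow>
     (\<forall>U V. openin tau U \<and> U \<noteq> {} \<and> openin tau V \<and> V \<noteq> {} \<longrightarrow>
        (\<exists>n\<ge>1. (T ^^ n) ` U \<inter> V \<noteq> {}))"

definition mixing_op :: "'v topology \<Rightarrow> ('v \<Rightarrow> 'v) \<Rightarrow> bool" where
  "mixing_op tau T \<longleftrightarrow>
     (\<forall>U V. openin tau U \<and> U \<noteq> {} \<and> openin tau V \<and> V \<noteq> {} \<longrightarrow>
        (\<exists>n\<ge>1. \<forall>m\<ge>n. (T ^^ m) ` U \<inter> V \<noteq> {}))"

definition poly_op :: "('k::comm_ring_1 \<Rightarrow> 'v::ab_group_add \<Rightarrow> 'v) \<Rightarrow> 'k poly \<Rightarrow> ('v \<Rightarrow> 'v) \<Rightarrow> 'v \<Rightarrow> 'v" where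
  "poly_op sc p T x = (\<Sum>i\<le>degree p. sc (coeff p i) ((T ^^ i) x))"

text \<open>The zero polynomial (degree -infinity by convention) is excluded.\<close>
definition poly_mixing_op :: "('k::real_normed_field \<Rightarrow> 'v::ab_group_add \<Rightarrow> 'v) \<Rightarrow> 'v topology \<Rightarrow> ('v \<Rightarrow> 'v) \<Rightarrow> bool" where
  "poly_mixing_op sc tau T \<longleftrightarrow>
     (\<forall>U V. openin tau U \<and> U \<noteq> {} \<and> openin tau V \<and> V \<noteq> {} \<longrightarrow>
        (\<exists>k::nat. \<forall>p::'k poly. p \<noteq> 0 \<and> degree p \<ge> k \<longrightarrow> poly_op sc p T ` U \<inter> V \<noteq> {}))"

definition equivalences_hold :: "('k::real_normed_field \<Rightarrow> 'v::ab_group_add \<Rightarrow> 'v) \<Rightarrow> 'v topology \<Rightarrow> ('v \<Rightarrow> 'v) \<Rightarrow> bool" where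
  "equivalences_hold sc tau T \<longleftrightarrow>
     (dual_has_no_nontrivial_fd_invariant_subspace sc tau T \<longleftrightarrow> transitive_op tau T) \<and>
     (transitive_op tau T \<longleftrightarrow> mixing_op tau T) \<and>
     (mixing_op tau T \<longleftrightarrow> poly_mixing_op sc tau T)"

end

theory Submission
  imports Defs "HOL-Library.Function_Algebras" "HOL-Computational_Algebra.Fundamental_Theorem_Algebra"
begin


definition fsc :: "'k::field \<Rightarrow> ('v \<Rightarrow> 'k) \<Rightarrow> ('v \<Rightarrow> 'k)" where
  "fsc c f = (\<lambda>x. c * f x)"
lemma vs_fsc: "vector_space (fsc :: 'k::field \<Rightarrow> ('v \<Rightarrow> 'k) \<Rightarrow> _)"
  by unfold_locales (auto simp: fsc_def fun_eq_iff algebra_simps)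
interpretation fs: vector_space "fsc :: 'k::field \<Rightarrow> ('v \<Rightarrow> 'k) \<Rightarrow> _" by (rule vs_fsc)
interpretation fsp: vector_space_pair "fsc :: 'k::field \<Rightarrow> ('v \<Rightarrow> 'k) \<Rightarrow> _" "fsc :: 'k::field \<Rightarrow> ('v \<Rightarrow> 'k) \<Rightarrow> _" by unfold_locales

definition sh :: "('v \<Rightarrow> 'v) \<Rightarrow> nat \<Rightarrow> ('v \<Rightarrow> 'k) \<Rightarrow> ('v \<Rightarrow> 'k)" where
  "sh T i f = (\<lambda>x. f ((T^^i) x))"

lemma sh_sh: "sh T i (sh T j f) = sh T (j + i) f"
  by (simp add: sh_def funpow_add)
lemma sh_0[simp]: "sh T 0 f = f" by (simp add: sh_def)
lemma sh_plus: "sh T i (f + g) = sh T i f + sh T i g" by (simp add: sh_def fun_eq_iff)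
lemma sh_fsc: "sh T i (fsc c f) = fsc c (sh T i f)" by (simp add: sh_def fsc_def)
lemma sh_linear: "Vector_Spaces.linear (fsc :: 'k::field \<Rightarrow> ('v \<Rightarrow> 'k) \<Rightarrow> _) fsc (sh T i)"
  by (simp add: Vector_Spaces.linear_iff vs_fsc sh_plus sh_fsc)

locale alg =
  fixes T :: "'v \<Rightarrow> 'v" and G :: "('v \<Rightarrow> 'k::field) set"
  assumes finG: "finite G"
begin

definition A :: "nat \<Rightarrow> ('v \<Rightarrow> 'k) set" where "A n = (\<Union>i<n. sh T i ` G)"
definition V :: "nat \<Rightarrow> ('v \<Rightarrow> 'k) set" where "V n = fs.span (A n)"
definition E :: "('v \<Rightarrow> 'k) set" where "E = fs.span G"
definition K :: "nat \<Rightarrow> ('v \<Rightarrow> 'k) set" where "K n = {x \<in> E. sh T n x \<in> V n}"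

lemma finA: "finite (A n)" using finG by (simp add: A_def)
lemma A_mono: "m \<le> n \<Longrightarrow> A m \<subseteq> A n" unfolding A_def by (intro UN_mono) auto
lemma V_mono: "m \<le> n \<Longrightarrow> V m \<subseteq> V n" unfolding V_def by (intro fs.span_mono A_mono)
lemma E_sub: "1 \<le> n \<Longrightarrow> E \<subseteq> V n"
proof -
  assume "1 \<le> n"
  then have "sh T 0 ` G \<subseteq> A n" unfolding A_def by (intro subsetI UN_I[of 0]) auto
  then have "G \<subseteq> A n" by simp
  then show ?thesis unfolding E_def V_def by (rule fs.span_mono)
qed
lemma V_sh: "v \<in> V n \<Longrightarrow> sh T j v \<in> V (n + j)"
proof -
  assume v: "v \<in> V n"
  have "sh T j ` A n \<subseteq> A (n + j)"
    unfolding A_def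
  proof (intro subsetI)
    fix y assume "y \<in> sh T j ` (\<Union>i<n. sh T i ` G)"
    then obtain i g where "i < n" "g \<in> G" "y = sh T j (sh T i g)" by blast
    then have "y = sh T (i+j) g" "i + j < n + j" by (simp_all add: sh_sh)
    then show "y \<in> (\<Union>i<n+j. sh T i ` G)" using \<open>g \<in> G\<close> by blast
  qed
  then have "fs.span (sh T j ` A n) \<subseteq> V (n + j)" unfolding V_def by (rule fs.span_mono)
  moreover have "fs.span (sh T j ` A n) = sh T j ` V n"
    unfolding V_def by (rule fsp.linear_span_image[OF sh_linear])
  ultimately show ?thesis using v by auto
qed
lemma V_decomp:
  assumes "v \<in> V (Suc n)" shows "\<exists>w x. w \<in> V n \<and> x \<in> E \<and> v = w + sh T n x"
proof -
  have "A (Suc n) = A n \<union> sh T n ` G" by (auto simp: A_def lessThan_Suc)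
  then have "V (Suc n) = {a + b | a b. a \<in> V n \<and> b \<in> fs.span (sh T n ` G)}"
    by (simp add: V_def fs.span_Un)
  moreover have "fs.span (sh T n ` G) = sh T n ` E"
    unfolding E_def by (rule fsp.linear_span_image[OF sh_linear])
  ultimately obtain w b where "w \<in> V n" "b \<in> sh T n ` E" "v = w + b" using assms by blast
  then show ?thesis by blast
qed

lemma V_subspace: "fs.subspace (V n)" unfolding V_def by (rule fs.subspace_span)
lemma E_subspace: "fs.subspace E" unfolding E_def by (rule fs.subspace_span)

lemma K_subspace: "fs.subspace (K n)"
  using V_subspace[of n] E_subspace unfolding fs.subspace_def K_def
  by (auto simp: sh_plus sh_fsc) (simp add: sh_def zero_fun_def)

lemma K_mono: "x \<in> K n \<Longrightarrow> x \<in> K (Suc n)"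
  using V_sh[of "sh T n x" n 1] by (auto simp: K_def sh_sh)

lemma K_mono': "m \<le> n \<Longrightarrow> K m \<subseteq> K n"
  by (induction n) (auto simp: le_Suc_eq intro: K_mono)

lemma K_E: "K n \<subseteq> E" by (auto simp: K_def)

lemma stab: "\<exists>n0. \<forall>n\<ge>n0. K n \<subseteq> K n0"
proof -
  have "\<exists>B. B \<subseteq> K n \<and> fs.independent B \<and> K n \<subseteq> fs.span B" for n
    by (meson fs.maximal_independent_subset)
  then obtain B where B: "\<And>n. B n \<subseteq> K n" "\<And>n. fs.independent (B n)" "\<And>n. K n \<subseteq> fs.span (B n)"
    by metis
  have bnd: "finite (B n) \<and> card (B n) \<le> card G" for n
  proof -
    have "B n \<subseteq> fs.span G" using B(1)[of n] K_E unfolding E_def by auto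
    then show ?thesis using fs.independent_span_bound[OF finG B(2)] by blast
  qed
  define f where "f n = card (B n)" for n
  have fin: "finite (range f)" unfolding f_def
    by (rule finite_subset[of _ "{..card G}"]) (use bnd in auto)
  have "Max (range f) \<in> range f" using fin by (intro Max_in) auto
  then obtain n0 where n0eq: "f n0 = Max (range f)" by auto
  have n0: "f n \<le> f n0" for n unfolding n0eq using fin by (intro Max_ge) auto
  have "K n \<subseteq> K n0" if "n \<ge> n0" for n
  proof
    fix y assume y: "y \<in> K n"
    show "y \<in> K n0"
    proof (rule ccontr)
      assume "y \<notin> K n0"
      then have ny: "y \<notin> fs.span (B n0)"
        using fs.span_minimal[OF B(1) K_subspace, of n0] by auto
      have ind: "fs.independent (insert y (B n0))" by (rule fs.independent_insertI[OF ny B(2)])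
      have "insert y (B n0) \<subseteq> fs.span (B n)"
        using y B(1)[of n0] K_mono'[OF that] B(3)[of n] by auto
      then have "card (insert y (B n0)) \<le> card (B n)"
        using fs.independent_span_bound[OF _ ind] bnd by blast
      moreover have "y \<notin> B n0" using ny fs.span_base by blast
      ultimately have "f n0 + 1 \<le> f n" using bnd unfolding f_def by simp
      then show False using n0[of n] by simp
    qed
  qed
  then show ?thesis by blast
qed

lemma key:
  assumes n0: "\<forall>n\<ge>n0. K n \<subseteq> K n0" and n: "n \<ge> n0"
    and v: "v \<in> V (Suc n)" "v \<notin> V n"
  shows "sh T 1 v \<notin> V (Suc n)"
proof
  assume sv: "sh T 1 v \<in> V (Suc n)"
  obtain w x where w: "w \<in> V n" "x \<in> E" "v = w + sh T n x" using V_decomp[OF v(1)] by blast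
  have "sh T 1 v = sh T 1 w + sh T (Suc n) x" using w by (simp add: sh_plus sh_sh)
  moreover have "sh T 1 w \<in> V (Suc n)" using V_sh[OF w(1), of 1] by simp
  ultimately have "sh T (Suc n) x \<in> V (Suc n)"
    using sv fs.subspace_diff[OF V_subspace] by (metis add_diff_cancel_left')
  then have "x \<in> K (Suc n)" using w by (simp add: K_def)
  then have "x \<in> K n0" using n0 n by (meson le_SucI subsetD)
  then have "x \<in> K n" using K_mono'[OF n] by blast
  then have "sh T n x \<in> V n" by (simp add: K_def)
  then have "v \<in> V n" using w fs.subspace_add[OF V_subspace] by auto
  then show False using v by simp
qed

lemma key_iter:
  assumes n0: "\<forall>n\<ge>n0. K n \<subseteq> K n0" and n: "n \<ge> n0"
    and v: "v \<in> V (Suc n)" "v \<notin> V n"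
  shows "sh T j v \<in> V (Suc n + j) \<and> sh T j v \<notin> V (n + j)"
proof (induction j)
  case 0 then show ?case using v by simp
next
  case (Suc j)
  have "sh T 1 (sh T j v) \<notin> V (Suc (n + j))"
    using key[OF n0 _ , of "n + j" "sh T j v"] Suc n by simp
  moreover have "sh T 1 (sh T j v) = sh T (Suc j) v" by (simp add: sh_sh)
  ultimately show ?case using V_sh[OF v(1), of "Suc j"] by simp
qed

lemma key_sum:
  assumes n0: "\<forall>n\<ge>n0. K n \<subseteq> K n0" and n: "n \<ge> n0"
    and v: "v \<in> V (Suc n)" "v \<notin> V n" and cD: "c D \<noteq> 0"
  shows "(\<Sum>i\<le>D. fsc (c i) (sh T i v)) \<notin> V (n + D)"
proof
  assume s: "(\<Sum>i\<le>D. fsc (c i) (sh T i v)) \<in> V (n + D)"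
  have r: "(\<Sum>i<D. fsc (c i) (sh T i v)) \<in> V (n + D)"
  proof (intro fs.subspace_sum[OF V_subspace] fs.subspace_scale[OF V_subspace])
    fix i assume "i \<in> {..<D}"
    then have "Suc n + i \<le> n + D" by simp
    then show "sh T i v \<in> V (n + D)" using key_iter[OF n0 n v, of i] V_mono by blast
  qed
  have eq: "(\<Sum>i\<le>D. fsc (c i) (sh T i v)) = fsc (c D) (sh T D v) + (\<Sum>i<D. fsc (c i) (sh T i v))"
  proof -
    have "{..D} = insert D {..<D}" by auto
    then show ?thesis by simp
  qed
  have "fsc (c D) (sh T D v) = (\<Sum>i\<le>D. fsc (c i) (sh T i v)) - (\<Sum>i<D. fsc (c i) (sh T i v))"
    unfolding eq by simp
  then have "fsc (c D) (sh T D v) \<in> V (n + D)"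
    using s r fs.subspace_diff[OF V_subspace] by simp
  then have "fsc (inverse (c D)) (fsc (c D) (sh T D v)) \<in> V (n + D)"
    by (rule fs.subspace_scale[OF V_subspace])
  moreover have "fsc (inverse (c D)) (fsc (c D) (sh T D v)) = sh T D v"
    using cD by (simp add: fsc_def mult.assoc[symmetric])
  ultimately have "sh T D v \<in> V (n + D)" by simp
  then show False using key_iter[OF n0 n v, of D] by simp
qed

lemma find_level:
  assumes "v \<in> V M" "v \<notin> V n0"
  shows "\<exists>n. n0 \<le> n \<and> n < M \<and> v \<in> V (Suc n) \<and> v \<notin> V n"
  using assms
proof (induction M)
  case 0 then show ?case using V_mono[of 0 n0] by auto
next
  case (Suc M)
  show ?case
  proof (cases "v \<in> V M")
    case True then show ?thesis using Suc by force
  next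
    case False
    have "n0 \<le> M" using V_mono[of "Suc M" n0] Suc False by (meson not_less_eq_eq subsetD)
    then show ?thesis using Suc False by auto
  qed
qed

lemma sum_split_nat:
  fixes f :: "nat \<Rightarrow> 'a::comm_monoid_add"
  shows "j \<le> d \<Longrightarrow> (\<Sum>i\<le>d. f i) = (\<Sum>i<j. f i) + (\<Sum>l\<le>d-j. f (l+j))"
proof (induction d)
  case 0 then show ?case by simp
next
  case (Suc d)
  show ?case
  proof (cases "j = Suc d")
    case True
    have "sum f {..d} = sum f {..<d} + f d" by (metis lessThan_Suc_atMost sum.lessThan_Suc)
    with True show ?thesis by simp
  next
    case False
    then have "j \<le> d" using Suc by simp
    then have "Suc d - j = Suc (d - j)" by simp
    then show ?thesis using Suc.IH[OF \<open>j \<le> d\<close>] \<open>j \<le> d\<close> by (simp add: add.assoc)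
  qed
qed

theorem main_alg:
  assumes TF: "\<forall>e\<in>E. e \<noteq> 0 \<longrightarrow> (\<forall>N. fs.independent ((\<lambda>j. sh T j e) ` {..N}) \<and> inj_on (\<lambda>j. sh T j e) {..N})"
  shows "\<exists>k. \<forall>d\<ge>k. \<forall>c. c d \<noteq> 0 \<longrightarrow> (\<forall>e\<in>E. (\<Sum>i\<le>d. fsc (c i) (sh T i e)) \<in> E \<longrightarrow> e = 0)"
proof -
  obtain n0 where n0: "\<forall>n\<ge>n0. K n \<subseteq> K n0" using stab by blast
  define a where "a = card (A n0)"
  have "\<forall>d\<ge>2*a+2. \<forall>c. c d \<noteq> 0 \<longrightarrow> (\<forall>e\<in>E. (\<Sum>i\<le>d. fsc (c i) (sh T i e)) \<in> E \<longrightarrow> e = 0)"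
  proof (intro allI impI ballI)
    fix d c e assume d: "d \<ge> 2*a+2" and cd: "c d \<noteq> 0" and e: "e \<in> E"
      and sE: "(\<Sum>i\<le>d. fsc (c i) (sh T i e)) \<in> E"
    show "e = 0"
    proof (rule ccontr)
      assume e0: "e \<noteq> 0"
      have "\<exists>j\<le>a. sh T j e \<notin> V n0"
      proof (rule ccontr)
        assume "\<not> ?thesis"
        then have sub: "(\<lambda>j. sh T j e) ` {..a} \<subseteq> fs.span (A n0)" by (auto simp: V_def)
        have "card ((\<lambda>j. sh T j e) ` {..a}) \<le> card (A n0)"
          using fs.independent_span_bound[OF finA _ sub] TF e e0 by blast
        moreover have "card ((\<lambda>j. sh T j e) ` {..a}) = Suc a"
          using TF e e0 by (simp add: card_image)
        ultimately show False by (simp add: a_def)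
      qed
      then obtain j where j: "j \<le> a" "sh T j e \<notin> V n0" by blast
      define v where "v = sh T j e"
      have "v \<in> V (1 + j)" using V_sh[of e 1 j] E_sub[of 1] e by (auto simp: v_def)
      then obtain n where n: "n0 \<le> n" "n < 1 + j" "v \<in> V (Suc n)" "v \<notin> V n"
        using find_level[of v "1+j" n0] j by (auto simp: v_def)
      have split: "(\<Sum>i\<le>d. fsc (c i) (sh T i e)) =
          (\<Sum>i<j. fsc (c i) (sh T i e)) + (\<Sum>l\<le>d-j. fsc (c (l+j)) (sh T l v))"
        using sum_split_nat[of j d "\<lambda>i. fsc (c i) (sh T i e)"] j d by (simp add: v_def sh_sh add.commute)
      have ns: "(\<Sum>l\<le>d-j. fsc (c (l+j)) (sh T l v)) \<notin> V (n + (d - j))"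
        using key_sum[OF n0 n(1) n(3) n(4), of "\<lambda>l. c (l + j)" "d - j"] cd j d by simp
      have "V j \<subseteq> V (n + (d - j))" using j d by (intro V_mono) simp
      moreover have "(\<Sum>i<j. fsc (c i) (sh T i e)) \<in> V j"
      proof (intro fs.subspace_sum[OF V_subspace] fs.subspace_scale[OF V_subspace])
        fix i assume "i \<in> {..<j}"
        then have "1 + i \<le> j" by simp
        then show "sh T i e \<in> V j" using V_sh[of e 1 i] E_sub[of 1] e V_mono by blast
      qed
      ultimately have f: "(\<Sum>i<j. fsc (c i) (sh T i e)) \<in> V (n + (d - j))" by blast
      have "1 \<le> n + (d - j)" using j d by simp
      then have "(\<Sum>i\<le>d. fsc (c i) (sh T i e)) \<in> V (n + (d - j))"
        using sE E_sub[of "n + (d - j)"] by blast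
      moreover have "(\<Sum>l\<le>d-j. fsc (c (l+j)) (sh T l v)) =
          (\<Sum>i\<le>d. fsc (c i) (sh T i e)) - (\<Sum>i<j. fsc (c i) (sh T i e))"
        unfolding split by simp
      ultimately have "(\<Sum>l\<le>d-j. fsc (c (l+j)) (sh T l v)) \<in> V (n + (d - j))"
        using f fs.subspace_diff[OF V_subspace] by simp
      then show False using ns by simp
    qed
  qed
  then show ?thesis by blast
qed

end


lemma vs_mult: "vector_space ((*) :: 'k::field \<Rightarrow> 'k \<Rightarrow> 'k)"
  by unfold_locales (auto simp: algebra_simps)

lemma lin_add: "Vector_Spaces.linear sc ((*) :: 'k::field \<Rightarrow> _) f \<Longrightarrow> f (x + y) = f x + f y"
  by (simp add: Vector_Spaces.linear_iff)
lemma lin_scale: "Vector_Spaces.linear sc ((*) :: 'k::field \<Rightarrow> _) f \<Longrightarrow> f (sc r x) = r * f x"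
  by (simp add: Vector_Spaces.linear_iff)

lemma interp:
  fixes sc :: "'k::field \<Rightarrow> 'v::ab_group_add \<Rightarrow> 'v" and \<phi> :: "'i \<Rightarrow> 'v \<Rightarrow> 'k"
  assumes vs: "vector_space sc" and fin: "finite I"
    and lin: "\<forall>i\<in>I. Vector_Spaces.linear sc (*) (\<phi> i)"
    and compat: "\<forall>a. (\<forall>x. (\<Sum>i\<in>I. a i * \<phi> i x) = 0) \<longrightarrow> (\<Sum>i\<in>I. a i * c i) = 0"
  shows "\<exists>x. \<forall>i\<in>I. \<phi> i x = c i"
  using fin lin compat
proof (induction I arbitrary: \<phi> c rule: finite_induct)
  case empty then show ?case by simp
next
  case (insert j I)
  note jI = \<open>j \<notin> I\<close>
  show ?case
  proof (cases "\<forall>x. \<phi> j x = 0")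
    case True
    have cj: "c j = 0"
    proof -
      let ?a = "\<lambda>i. if i = j then 1 else (0::'k)"
      have s0: "(\<Sum>i\<in>I. ?a i * f i) = 0" for f :: "'i \<Rightarrow> 'k"
        using jI by (intro sum.neutral) auto
      have Hx: "\<forall>x. (\<Sum>i\<in>insert j I. ?a i * \<phi> i x) = 0"
        using True insert.hyps s0 by simp
      have "(\<Sum>i\<in>insert j I. ?a i * c i) = 0" by (rule insert.prems(2)[rule_format]) (use Hx in blast)
      then show ?thesis using insert.hyps s0 by simp
    qed
    have "\<exists>x. \<forall>i\<in>I. \<phi> i x = c i"
    proof (rule insert.IH)
      show "\<forall>i\<in>I. Vector_Spaces.linear sc (*) (\<phi> i)" using insert.prems by auto
      show "\<forall>a. (\<forall>x. (\<Sum>i\<in>I. a i * \<phi> i x) = 0) \<longrightarrow> (\<Sum>i\<in>I. a i * c i) = 0"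
      proof (intro allI impI)
        fix a assume a: "\<forall>x. (\<Sum>i\<in>I. a i * \<phi> i x) = 0"
        have e: "(\<Sum>i\<in>I. (a(j:=0)) i * f i) = (\<Sum>i\<in>I. a i * f i)" for f :: "'i \<Rightarrow> 'k"
          using jI by (intro sum.cong) auto
        have Hx: "\<forall>x. (\<Sum>i\<in>insert j I. (a(j:=0)) i * \<phi> i x) = 0"
          using insert.hyps a e by simp
        have "(\<Sum>i\<in>insert j I. (a(j:=0)) i * c i) = 0" by (rule insert.prems(2)[rule_format]) (use Hx in blast)
        then show "(\<Sum>i\<in>I. a i * c i) = 0" using insert.hyps e by simp
      qed
    qed
    then show ?thesis using True cj by auto
  next
    case False
    then obtain w where w: "\<phi> j w \<noteq> 0" by blast
    define \<alpha> where "\<alpha> i = \<phi> i w / \<phi> j w" for i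
    define \<psi> where "\<psi> i x = \<phi> i x - \<alpha> i * \<phi> j x" for i x
    define c' where "c' i = c i - \<alpha> i * c j" for i
    have linj: "Vector_Spaces.linear sc (*) (\<phi> j)" using insert.prems by auto
    have "\<exists>x. \<forall>i\<in>I. \<psi> i x = c' i"
    proof (rule insert.IH)
      show "\<forall>i\<in>I. Vector_Spaces.linear sc (*) (\<psi> i)"
      proof
        fix i assume "i \<in> I"
        then have lini: "Vector_Spaces.linear sc (*) (\<phi> i)" using insert.prems by auto
        show "Vector_Spaces.linear sc (*) (\<psi> i)"
          unfolding Vector_Spaces.linear_iff using vs vs_mult
          by (simp add: \<psi>_def lin_add[OF lini] lin_add[OF linj] lin_scale[OF lini] lin_scale[OF linj] algebra_simps)
      qed
      show "\<forall>a. (\<forall>x. (\<Sum>i\<in>I. a i * \<psi> i x) = 0) \<longrightarrow> (\<Sum>i\<in>I. a i * c' i) = 0"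
      proof (intro allI impI)
        fix a assume a: "\<forall>x. (\<Sum>i\<in>I. a i * \<psi> i x) = 0"
        define s where "s = (\<Sum>i\<in>I. a i * \<alpha> i)"
        define a' where "a' = a(j := - s)"
        have e: "(\<Sum>i\<in>I. a' i * f i) = (\<Sum>i\<in>I. a i * f i)" for f :: "'i \<Rightarrow> 'k"
          using jI unfolding a'_def by (intro sum.cong) auto
        have ps: "(\<Sum>i\<in>I. a i * \<psi> i x) = (\<Sum>i\<in>I. a i * \<phi> i x) - s * \<phi> j x" for x
          unfolding \<psi>_def s_def by (simp add: algebra_simps sum_subtractf sum_distrib_left sum_distrib_right)
        have cs: "(\<Sum>i\<in>I. a i * c' i) = (\<Sum>i\<in>I. a i * c i) - s * c j"
          unfolding c'_def s_def by (simp add: algebra_simps sum_subtractf sum_distrib_left sum_distrib_right)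
        have Hx: "\<forall>x. (\<Sum>i\<in>insert j I. a' i * \<phi> i x) = 0"
        proof
          fix x
          have "(\<Sum>i\<in>insert j I. a' i * \<phi> i x) = - s * \<phi> j x + (\<Sum>i\<in>I. a i * \<phi> i x)"
            using insert.hyps e by (simp add: a'_def)
          also have "\<dots> = (\<Sum>i\<in>I. a i * \<psi> i x)" using ps by simp
          finally show "(\<Sum>i\<in>insert j I. a' i * \<phi> i x) = 0" using a by simp
        qed
        have "(\<Sum>i\<in>insert j I. a' i * c i) = 0" by (rule insert.prems(2)[rule_format]) (use Hx in blast)
        then have "- s * c j + (\<Sum>i\<in>I. a i * c i) = 0"
          using insert.hyps e by (simp add: a'_def)
        then show "(\<Sum>i\<in>I. a i * c' i) = 0" using cs by (simp add: algebra_simps)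
      qed
    qed
    then obtain x where x: "\<forall>i\<in>I. \<psi> i x = c' i" by blast
    define t where "t = (c j - \<phi> j x) / \<phi> j w"
    define x' where "x' = x + sc t w"
    have "\<phi> i x' = c i" if i: "i \<in> insert j I" for i
    proof -
      have lini: "Vector_Spaces.linear sc (*) (\<phi> i)" using insert.prems i by auto
      have ev: "\<phi> i x' = \<phi> i x + t * \<phi> i w"
        unfolding x'_def by (simp add: lin_add[OF lini] lin_scale[OF lini])
      show ?thesis
      proof (cases "i = j")
        case True then show ?thesis using ev w by (simp add: t_def)
      next
        case False
        then have "i \<in> I" using i by simp
        then have "\<phi> i x - \<alpha> i * \<phi> j x = c i - \<alpha> i * c j" using x by (simp add: \<psi>_def c'_def)
        then have "\<phi> i x = c i - \<alpha> i * (c j - \<phi> j x)" by (simp add: algebra_simps)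
        also have "\<alpha> i * (c j - \<phi> j x) = t * \<phi> i w" using w by (simp add: \<alpha>_def t_def)
        finally show ?thesis using ev by simp
      qed
    qed
    then show ?thesis by blast
  qed
qed

lemma weak_nbhd:
  fixes Y :: "('v \<Rightarrow> 'k::real_normed_field) set"
  assumes wk: "is_weakest_topology_for Y tau" and U: "openin tau U" and u: "u \<in> U"
  shows "\<exists>G \<epsilon>. finite G \<and> G \<subseteq> Y \<and> \<epsilon> > 0 \<and> {x. \<forall>g\<in>G. norm (g x - g u) < \<epsilon>} \<subseteq> U"
proof -
  define S where "S = insert UNIV {f -` W | f W. f \<in> Y \<and> open W}"
  define sigma where "sigma = topology_generated_by S"
  have ts: "topspace sigma = UNIV" unfolding sigma_def S_def by auto
  have cont: "\<forall>f\<in>Y. continuous_map sigma euclidean f"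
  proof
    fix f assume f: "f \<in> Y"
    show "continuous_map sigma euclidean f"
      unfolding continuous_map_def ts
    proof (intro conjI allI impI)
      fix W :: "'k set" assume "openin euclidean W"
      then have "f -` W \<in> S" using f unfolding S_def by auto
      then have "openin sigma (f -` W)"
        unfolding sigma_def openin_topology_generated_by_iff by (rule generate_topology_on.Basis)
      then show "openin sigma {x \<in> UNIV. f x \<in> W}" by (simp add: vimage_def)
    qed auto
  qed
  have "\<forall>sg :: 'v topology. topspace sg = UNIV \<and> (\<forall>f\<in>Y. continuous_map sg euclidean f)
        \<longrightarrow> (\<forall>S. openin tau S \<longrightarrow> openin sg S)"
    using wk unfolding is_weakest_topology_for_def by (elim conjE)
  then have "\<forall>S. openin tau S \<longrightarrow> openin sigma S" using ts cont by (elim allE[of _ sigma]) simp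
  then have "openin sigma U" using U by simp
  then have gen: "generate_topology_on S U" unfolding sigma_def openin_topology_generated_by_iff .
  have "\<forall>u\<in>s. \<exists>G \<epsilon>. finite G \<and> G \<subseteq> Y \<and> \<epsilon> > 0 \<and> {x. \<forall>g\<in>G. norm (g x - g u) < \<epsilon>} \<subseteq> s"
    if "generate_topology_on S s" for s
    using that
  proof (induction rule: generate_topology_on.induct)
    case Empty then show ?case by simp
  next
    case (Int a b)
    show ?case
    proof
      fix u assume "u \<in> a \<inter> b"
      then have ua: "u \<in> a" and ub: "u \<in> b" by auto
      obtain G1 e1 where 1: "finite G1" "G1 \<subseteq> Y" "e1 > 0" "{x. \<forall>g\<in>G1. norm (g x - g u) < e1} \<subseteq> a"
        using Int.IH(1) ua by meson
      obtain G2 e2 where 2: "finite G2" "G2 \<subseteq> Y" "e2 > 0" "{x. \<forall>g\<in>G2. norm (g x - g u) < e2} \<subseteq> b"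
        using Int.IH(2) ub by meson
      have "{x. \<forall>g\<in>G1 \<union> G2. norm (g x - g u) < min e1 e2} \<subseteq> a \<inter> b"
      proof
        fix x assume "x \<in> {x. \<forall>g\<in>G1 \<union> G2. norm (g x - g u) < min e1 e2}"
        then have "x \<in> {x. \<forall>g\<in>G1. norm (g x - g u) < e1}" "x \<in> {x. \<forall>g\<in>G2. norm (g x - g u) < e2}"
          by auto
        then show "x \<in> a \<inter> b" using 1(4) 2(4) by blast
      qed
      then show "\<exists>G \<epsilon>. finite G \<and> G \<subseteq> Y \<and> \<epsilon> > 0 \<and> {x. \<forall>g\<in>G. norm (g x - g u) < \<epsilon>} \<subseteq> a \<inter> b"
        using 1 2 by (intro exI[of _ "G1 \<union> G2"] exI[of _ "min e1 e2"]) auto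
    qed
  next
    case (UN K)
    show ?case
    proof
      fix u assume "u \<in> \<Union>K"
      then obtain k where k: "k \<in> K" "u \<in> k" by blast
      show "\<exists>G \<epsilon>. finite G \<and> G \<subseteq> Y \<and> \<epsilon> > 0 \<and> {x. \<forall>g\<in>G. norm (g x - g u) < \<epsilon>} \<subseteq> \<Union>K"
      proof -
        obtain G e where Ge: "finite G" "G \<subseteq> Y" "e > 0" "{x. \<forall>g\<in>G. norm (g x - g u) < e} \<subseteq> k"
          using UN.IH[OF k(1)] k(2) by meson
        have "k \<subseteq> \<Union>K" using k(1) by blast
        with Ge(4) have sub: "{x. \<forall>g\<in>G. norm (g x - g u) < e} \<subseteq> \<Union>K" by (rule subset_trans)
        show ?thesis using Ge(1-3) sub by (intro exI[of _ G] exI[of _ e] conjI) simp_all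
      qed
    qed
  next
    case (Basis s)
    show ?case
    proof
      fix u assume us: "u \<in> s"
      show "\<exists>G \<epsilon>. finite G \<and> G \<subseteq> Y \<and> \<epsilon> > 0 \<and> {x. \<forall>g\<in>G. norm (g x - g u) < \<epsilon>} \<subseteq> s"
      proof (cases "s = UNIV")
        case True then show ?thesis by (intro exI[of _ "{}"] exI[of _ 1]) auto
      next
        case False
        then have "s \<in> {f -` W | f W. f \<in> Y \<and> open W}" using Basis unfolding S_def by simp
        then obtain f W where fW: "s = f -` W" "f \<in> Y" "open W" by blast
        then have "f u \<in> W" using us by auto
        then obtain e where e: "e > 0" "ball (f u) e \<subseteq> W" using fW(3) open_contains_ball by blast
        have "{x. \<forall>g\<in>{f}. norm (g x - g u) < e} \<subseteq> s"
        proof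
          fix x assume "x \<in> {x. \<forall>g\<in>{f}. norm (g x - g u) < e}"
          then have "dist (f u) (f x) < e" by (simp add: dist_norm norm_minus_commute)
          then have "f x \<in> W" using e(2) by auto
          then show "x \<in> s" using fW(1) by simp
        qed
        then show ?thesis using fW e by (intro exI[of _ "{f}"] exI[of _ e]) auto
      qed
    qed
  qed
  then show ?thesis using gen u by blast
qed



lemma fun_sum_apply: "(sum F A) x = (\<Sum>a\<in>A. F a x)"
  by (induction A rule: infinite_finite_induct) auto

lemma cm_cmult:
  fixes f :: "'v \<Rightarrow> 'k::real_normed_field"
  assumes "continuous_map X euclidean f"
  shows "continuous_map X euclidean (\<lambda>x. c * f x)"
proof -
  have "continuous_map euclidean euclidean (\<lambda>z::'k. c * z)"
    by (simp add: continuous_map_iff_continuous2 continuous_on_mult_left continuous_on_id)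
  from continuous_map_compose[OF assms this] show ?thesis by (simp add: comp_def)
qed

lemma cm_iter: "continuous_map X X T \<Longrightarrow> continuous_map X X (T^^i)"
  by (induction i) (auto simp: continuous_map_compose)

lemma lin_iter:
  assumes "Vector_Spaces.linear sc sc T"
  shows "(T^^i) (x + y) = (T^^i) x + (T^^i) y" "(T^^i) (sc r x) = sc r ((T^^i) x)"
  using assms by (induction i) (auto simp: Vector_Spaces.linear_iff)

context
  fixes sc :: "'k::real_normed_field \<Rightarrow> 'v::ab_group_add \<Rightarrow> 'v" and tau :: "'v topology" and T :: "'v \<Rightarrow> 'v"
  assumes vs: "vector_space sc" and ts: "topspace tau = UNIV"
    and Tl: "Vector_Spaces.linear sc sc T" and Tc: "continuous_map tau tau T"
begin

lemma dual_subspace: "fs.subspace (dual_space sc tau)"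
proof -
  have z: "(0::'v \<Rightarrow> 'k) \<in> dual_space sc tau"
    using vs vs_mult by (simp add: dual_space_def Vector_Spaces.linear_iff zero_fun_def ts)
  have a: "f + g \<in> dual_space sc tau" if "f \<in> dual_space sc tau" "g \<in> dual_space sc tau" for f g :: "'v \<Rightarrow> 'k"
  proof -
    have "continuous_map tau euclidean (\<lambda>x. f x + g x)"
      using that by (intro continuous_map_add) (auto simp: dual_space_def)
    moreover have "Vector_Spaces.linear sc (*) (f + g)"
      using that vs vs_mult by (auto simp: dual_space_def Vector_Spaces.linear_iff algebra_simps)
    ultimately show ?thesis by (simp add: dual_space_def plus_fun_def)
  qed
  have s: "fsc c f \<in> dual_space sc tau" if "f \<in> dual_space sc tau" for c and f :: "'v \<Rightarrow> 'k"
  proof -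
    have "continuous_map tau euclidean (\<lambda>x. c * f x)"
      using that by (intro cm_cmult) (auto simp: dual_space_def)
    moreover have "Vector_Spaces.linear sc (*) (fsc c f)"
      using that vs vs_mult by (auto simp: dual_space_def Vector_Spaces.linear_iff fsc_def algebra_simps)
    ultimately show ?thesis by (simp add: dual_space_def fsc_def)
  qed
  show ?thesis unfolding fs.subspace_def using z a s by blast
qed

lemma sh_dual:
  assumes "f \<in> dual_space sc tau" shows "sh T i f \<in> dual_space sc tau"
proof -
  have f: "Vector_Spaces.linear sc (*) f" "continuous_map tau euclidean f" using assms by (auto simp: dual_space_def)
  have "Vector_Spaces.linear sc (*) (sh T i f)"
    using f vs vs_mult by (simp add: Vector_Spaces.linear_iff sh_def lin_iter[OF Tl])
  moreover have "continuous_map tau euclidean (sh T i f)"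
    using continuous_map_compose[OF cm_iter[OF Tc, of i] f(2)] by (simp add: sh_def comp_def)
  ultimately show ?thesis by (simp add: dual_space_def)
qed

lemma dual_op_sh: "dual_op T = sh T 1" by (simp add: fun_eq_iff dual_op_def sh_def)

lemma span_dual: "G \<subseteq> dual_space sc tau \<Longrightarrow> fs.span G \<subseteq> dual_space sc tau"
  by (rule fs.span_minimal[OF _ dual_subspace])

lemma fd_span: "finite B \<Longrightarrow> fs.span B = {(\<lambda>x. \<Sum>f\<in>B. c f * f x) | c. True}"
  by (auto simp: fs.span_finite fun_eq_iff fun_sum_apply fsc_def)

lemma TF:
  assumes D1: "dual_has_no_nontrivial_fd_invariant_subspace sc tau T"
    and e: "e \<in> dual_space sc tau" "e \<noteq> 0"
  shows "fs.independent ((\<lambda>j. sh T j e) ` {..N}) \<and> inj_on (\<lambda>j. sh T j e) {..N}"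
proof (induction N)
  case 0 then show ?case using e by simp
next
  case (Suc N)
  define B where "B = (\<lambda>j. sh T j e) ` {..N}"
  have finB: "finite B" by (simp add: B_def)
  have Bd: "B \<subseteq> dual_space sc tau" using sh_dual e by (auto simp: B_def)
  show ?case
  proof (cases "sh T (Suc N) e \<in> fs.span B")
    case True
    define L where "L = fs.span B"
    have "dual_op T ` B \<subseteq> L"
    proof
      fix y assume "y \<in> dual_op T ` B"
      then obtain j where j: "j \<le> N" "y = sh T (Suc j) e" by (auto simp: B_def dual_op_sh sh_sh)
      show "y \<in> L"
      proof (cases "j = N")
        case True then show ?thesis using \<open>sh T (Suc N) e \<in> fs.span B\<close> j by (simp add: L_def)
      next
        case False
        then have "y \<in> B" using j by (auto simp: B_def)
        then show ?thesis by (simp add: L_def fs.span_base)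
      qed
    qed
    then have "fs.span (dual_op T ` B) \<subseteq> L" unfolding L_def by (rule fs.span_minimal[OF _ fs.subspace_span])
    then have inv: "dual_op T ` L \<subseteq> L"
      unfolding L_def dual_op_sh fsp.linear_span_image[OF sh_linear, symmetric] by (simp add: L_def dual_op_sh)
    have sub: "is_subspace_of L (dual_space sc tau)"
      unfolding is_subspace_of_def
    proof (intro conjI ballI allI)
      show "L \<subseteq> dual_space sc tau" unfolding L_def by (rule span_dual[OF Bd])
      have "(0::'v\<Rightarrow>'k) \<in> L" unfolding L_def by (rule fs.span_zero)
      then show "(\<lambda>x. 0) \<in> L" by (simp add: zero_fun_def)
      fix f g assume "f \<in> L" "g \<in> L"
      then have "f + g \<in> L" unfolding L_def by (rule fs.span_add)
      then show "(\<lambda>x. f x + g x) \<in> L" by (simp add: plus_fun_def)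
    next
      fix c f assume "f \<in> L"
      then have "fsc c f \<in> L" unfolding L_def by (rule fs.span_scale)
      then show "(\<lambda>x. c * f x) \<in> L" by (simp add: fsc_def)
    qed
    have "e \<in> B" unfolding B_def by (rule image_eqI[of _ _ 0]) simp_all
    then have "e \<in> L" unfolding L_def by (rule fs.span_base)
    then have ne: "L \<noteq> {\<lambda>x. 0}" using e(2) by (auto simp: zero_fun_def)
    have "finite_dimensional_fs L"
      unfolding finite_dimensional_fs_def L_def
      apply (rule exI[of _ B])
      using finB fs.span_superset[of B] fd_span[OF finB] by blast
    then show ?thesis using D1 sub ne inv unfolding dual_has_no_nontrivial_fd_invariant_subspace_def by blast
  next
    case False
    have "fs.independent (insert (sh T (Suc N) e) B)"
      using fs.independent_insertI[OF False] Suc by (simp add: B_def)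
    moreover have "sh T (Suc N) e \<notin> B" using False fs.span_base by blast
    ultimately show ?thesis using Suc by (simp add: B_def atMost_Suc)
  qed
qed


lemma lin_zero: "Vector_Spaces.linear sc ((*) :: 'k \<Rightarrow> _) f \<Longrightarrow> f 0 = 0"
proof -
  interpret V: vector_space sc by (rule vs)
  show "Vector_Spaces.linear sc ((*) :: 'k \<Rightarrow> _) f \<Longrightarrow> f 0 = 0"
    using lin_scale[of sc f 0 0] V.scale_zero_left by simp
qed

lemma lin_sum_gen: "Vector_Spaces.linear sc ((*) :: 'k \<Rightarrow> _) f \<Longrightarrow> f (\<Sum>i\<in>A. F i) = (\<Sum>i\<in>A. f (F i))"
  by (induction A rule: infinite_finite_induct) (auto simp: lin_zero lin_add)

lemma eval_poly:
  assumes "g \<in> dual_space sc tau"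
  shows "g (poly_op sc p T x) = (\<Sum>i\<le>degree p. fsc (coeff p i) (sh T i g)) x"
proof -
  have l: "Vector_Spaces.linear sc (*) g" using assms by (simp add: dual_space_def)
  show ?thesis unfolding poly_op_def
    by (simp add: lin_sum_gen[OF l] lin_scale[OF l] fun_sum_apply fsc_def sh_def)
qed

lemma one_imp_four:
  assumes W: "weak_topology sc tau" and D1: "dual_has_no_nontrivial_fd_invariant_subspace sc tau T"
  shows "poly_mixing_op sc tau T"
  unfolding poly_mixing_op_def
proof (intro allI impI)
  fix U V assume UV: "openin tau U \<and> U \<noteq> {} \<and> openin tau V \<and> V \<noteq> {}"
  obtain Y where Y: "linear_space_of_functionals sc Y" "is_weakest_topology_for Y tau"
    using W unfolding weak_topology_def by blast
  have Yd: "Y \<subseteq> dual_space sc tau"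
  proof
    fix f assume f: "f \<in> Y"
    have "Vector_Spaces.linear sc (*) f" using Y(1) f unfolding linear_space_of_functionals_def by blast
    moreover have "continuous_map tau euclidean f" using Y(2) f unfolding is_weakest_topology_for_def by blast
    ultimately show "f \<in> dual_space sc tau" by (simp add: dual_space_def)
  qed
  have oU: "openin tau U" and oV: "openin tau V" and neU: "U \<noteq> {}" and neV: "V \<noteq> {}" using UV by simp_all
  obtain u where u: "u \<in> U" using neU by blast
  obtain v where v: "v \<in> V" using neV by blast
  obtain G1 e1 where 1: "finite G1" "G1 \<subseteq> Y" "e1 > 0" "{x. \<forall>g\<in>G1. norm (g x - g u) < e1} \<subseteq> U"
    using weak_nbhd[OF Y(2) oU u] by blast
  obtain G2 e2 where 2: "finite G2" "G2 \<subseteq> Y" "e2 > 0" "{x. \<forall>g\<in>G2. norm (g x - g v) < e2} \<subseteq> V"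
    using weak_nbhd[OF Y(2) oV v] by blast
  define G where "G = G1 \<union> G2"
  have finG: "finite G" using 1 2 by (simp add: G_def)
  have Gd: "G \<subseteq> dual_space sc tau" using 1 2 Yd by (auto simp: G_def)
  interpret alg T G by unfold_locales (rule finG)
  have Ed: "E \<subseteq> dual_space sc tau" unfolding E_def by (rule span_dual[OF Gd])
  have "\<forall>e\<in>E. e \<noteq> 0 \<longrightarrow> (\<forall>N. fs.independent ((\<lambda>j. sh T j e) ` {..N}) \<and> inj_on (\<lambda>j. sh T j e) {..N})"
    using TF[OF D1] Ed by blast
  from main_alg[OF this] obtain k where
    k: "\<forall>d\<ge>k. \<forall>c. c d \<noteq> 0 \<longrightarrow> (\<forall>e\<in>E. (\<Sum>i\<le>d. fsc (c i) (sh T i e)) \<in> E \<longrightarrow> e = 0)" by blast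
  show "\<exists>k. \<forall>p. p \<noteq> 0 \<and> k \<le> degree p \<longrightarrow> poly_op sc p T ` U \<inter> V \<noteq> {}"
  proof (intro exI[of _ k] allI impI)
    fix p :: "'k poly" assume p: "p \<noteq> 0 \<and> k \<le> degree p"
    define d where "d = degree p"
    define pT where "pT = poly_op sc p T"
    have cd: "coeff p d \<noteq> 0" using p by (simp add: d_def)
    define I :: "(('v \<Rightarrow> 'k) + ('v \<Rightarrow> 'k)) set" where "I = Inl ` G \<union> Inr ` G"
    define \<phi> :: "('v \<Rightarrow> 'k) + ('v \<Rightarrow> 'k) \<Rightarrow> 'v \<Rightarrow> 'k"
      where "\<phi> i = (case i of Inl g \<Rightarrow> g | Inr g \<Rightarrow> (\<lambda>x. g (pT x)))" for i
    define cc :: "('v \<Rightarrow> 'k) + ('v \<Rightarrow> 'k) \<Rightarrow> 'k"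
      where "cc i = (case i of Inl g \<Rightarrow> g u | Inr g \<Rightarrow> g v)" for i
    have ev: "g (pT x) = (\<Sum>i\<le>d. fsc (coeff p i) (sh T i g)) x" if "g \<in> dual_space sc tau" for g x
      using eval_poly[OF that] by (simp add: pT_def d_def)
    have sumI: "(\<Sum>i\<in>I. F i) = (\<Sum>g\<in>G. F (Inl g)) + (\<Sum>g\<in>G. F (Inr g))"
      for F :: "('v \<Rightarrow> 'k) + ('v \<Rightarrow> 'k) \<Rightarrow> 'k"
      unfolding I_def using finG
      by (subst sum.union_disjoint) (auto simp: sum.reindex)
    have "\<exists>x. \<forall>i\<in>I. \<phi> i x = cc i"
    proof (rule interp[OF vs])
      show "finite I" using finG by (simp add: I_def)
      show "\<forall>i\<in>I. Vector_Spaces.linear sc (*) (\<phi> i)"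
      proof
        fix i assume "i \<in> I"
        then obtain g where g: "g \<in> G" "i = Inl g \<or> i = Inr g" by (auto simp: I_def)
        have gd: "g \<in> dual_space sc tau" using g Gd by auto
        have "(\<lambda>x. g (pT x)) = (\<Sum>i\<le>d. fsc (coeff p i) (sh T i g))"
          using ev[OF gd] by (simp add: fun_eq_iff)
        moreover have "(\<Sum>i\<le>d. fsc (coeff p i) (sh T i g)) \<in> dual_space sc tau"
          by (intro fs.subspace_sum[OF dual_subspace] fs.subspace_scale[OF dual_subspace] sh_dual gd)
        ultimately have "(\<lambda>x. g (pT x)) \<in> dual_space sc tau" by simp
        then show "Vector_Spaces.linear sc (*) (\<phi> i)"
          using g gd by (auto simp: \<phi>_def dual_space_def)
      qed
      show "\<forall>a. (\<forall>x. (\<Sum>i\<in>I. a i * \<phi> i x) = 0) \<longrightarrow> (\<Sum>i\<in>I. a i * cc i) = 0"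
      proof (intro allI impI)
        fix a assume a: "\<forall>x. (\<Sum>i\<in>I. a i * \<phi> i x) = 0"
        define e where "e = (\<Sum>g\<in>G. fsc (a (Inr g)) g)"
        define f where "f = (\<Sum>g\<in>G. fsc (a (Inl g)) g)"
        have eE: "e \<in> E" unfolding e_def E_def
          by (intro fs.span_sum fs.span_scale fs.span_base)
        have fE: "f \<in> E" unfolding f_def E_def
          by (intro fs.span_sum fs.span_scale fs.span_base)
        have ed: "e \<in> dual_space sc tau" using eE Ed by auto
        have rel: "f x + e (pT x) = 0" for x
          using a[rule_format, of x] unfolding sumI
          by (simp add: \<phi>_def e_def f_def fun_sum_apply fsc_def)
        have "(\<Sum>i\<le>d. fsc (coeff p i) (sh T i e)) = fsc (-1) f"
          using rel ev[OF ed] by (auto simp: fun_eq_iff fsc_def eq_neg_iff_add_eq_0 add.commute)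
        moreover have "fsc (-1) f \<in> E" using fE E_subspace fs.subspace_scale by blast
        ultimately have "(\<Sum>i\<le>d. fsc (coeff p i) (sh T i e)) \<in> E" by simp
        then have e0: "e = 0" using k p cd eE unfolding d_def by blast
        then have f0: "f x = 0" for x using rel[of x] by simp
        have "(\<Sum>i\<in>I. a i * cc i) = f u + e v"
          unfolding sumI by (simp add: cc_def e_def f_def fun_sum_apply fsc_def)
        then show "(\<Sum>i\<in>I. a i * cc i) = 0" using e0 f0 by simp
      qed
    qed
    then obtain x where x: "\<forall>i\<in>I. \<phi> i x = cc i" by blast
    have "x \<in> U"
    proof -
      have "\<forall>g\<in>G1. g x = g u"
      proof
        fix g assume "g \<in> G1"
        then have "Inl g \<in> I" by (simp add: I_def G_def)
        then show "g x = g u" using x by (auto simp: \<phi>_def cc_def)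
      qed
      then have "x \<in> {x. \<forall>g\<in>G1. norm (g x - g u) < e1}" using 1(3) by (intro CollectI ballI) (metis diff_self norm_zero)
      then show ?thesis using 1(4) by blast
    qed
    moreover have "pT x \<in> V"
    proof -
      have "\<forall>g\<in>G2. g (pT x) = g v"
      proof
        fix g assume "g \<in> G2"
        then have "Inr g \<in> I" by (simp add: I_def G_def)
        then show "g (pT x) = g v" using x by (auto simp: \<phi>_def cc_def)
      qed
      then have "pT x \<in> {x. \<forall>g\<in>G2. norm (g x - g v) < e2}" using 2(3) by (intro CollectI ballI) (metis diff_self norm_zero)
      then show ?thesis using 2(4) by blast
    qed
    ultimately show "poly_op sc p T ` U \<inter> V \<noteq> {}" unfolding pT_def by blast
  qed
qed


lemma poly_op_monom: "poly_op sc (monom 1 m) T x = (T^^m) x"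
proof -
  interpret V: vector_space sc by (rule vs)
  have "poly_op sc (monom 1 m) T x = (\<Sum>i\<le>m. if i = m then (T^^m) x else 0)"
    unfolding poly_op_def degree_monom_eq[OF one_neq_zero] coeff_monom
    by (intro sum.cong) auto
  also have "\<dots> = (T^^m) x" by simp
  finally show ?thesis .
qed

lemma four_imp_three: "poly_mixing_op sc tau T \<Longrightarrow> mixing_op tau T"
  unfolding poly_mixing_op_def mixing_op_def
proof (intro allI impI)
  fix U V assume P: "\<forall>U V. openin tau U \<and> U \<noteq> {} \<and> openin tau V \<and> V \<noteq> {} \<longrightarrow>
        (\<exists>k. \<forall>p. p \<noteq> 0 \<and> k \<le> degree p \<longrightarrow> poly_op sc p T ` U \<inter> V \<noteq> {})"
    and UV: "openin tau U \<and> U \<noteq> {} \<and> openin tau V \<and> V \<noteq> {}"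
  obtain k where k: "\<forall>p. p \<noteq> 0 \<and> k \<le> degree p \<longrightarrow> poly_op sc p T ` U \<inter> V \<noteq> {}"
    using P UV by blast
  have "(T ^^ m) ` U \<inter> V \<noteq> {}" if "m \<ge> max k 1" for m
  proof -
    have "poly_op sc (monom 1 m) T ` U \<inter> V \<noteq> {}"
      using k[rule_format, of "monom 1 m"] that by (simp add: degree_monom_eq)
    moreover have "poly_op sc (monom 1 m) T = T^^m" by (simp add: fun_eq_iff poly_op_monom)
    ultimately show ?thesis by simp
  qed
  then show "\<exists>n\<ge>1. \<forall>m\<ge>n. (T ^^ m) ` U \<inter> V \<noteq> {}" by (intro exI[of _ "max k 1"]) auto
qed

lemma three_imp_two: "mixing_op tau T \<Longrightarrow> transitive_op tau T"
  unfolding mixing_op_def transitive_op_def by blast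

lemma not_one_rel:
  assumes "\<not> dual_has_no_nontrivial_fd_invariant_subspace sc tau T"
  shows "\<exists>f N c. f \<in> dual_space sc tau \<and> f \<noteq> 0 \<and> (\<exists>j\<le>N. c j \<noteq> 0) \<and>
            (\<forall>x. (\<Sum>j\<le>N. c j * f ((T^^j) x)) = 0)"
proof -
  obtain L where L: "is_subspace_of L (dual_space sc tau)" "L \<noteq> {\<lambda>x. 0}" "finite_dimensional_fs L"
    "dual_op T ` L \<subseteq> L"
    using assms unfolding dual_has_no_nontrivial_fd_invariant_subspace_def by blast
  obtain F where F: "finite F" "F \<subseteq> L" "L = {(\<lambda>x. \<Sum>f\<in>F. c f * f x) | c. True}"
    using L(3) unfolding finite_dimensional_fs_def by blast
  have LF: "L = fs.span F" using F by (simp add: fd_span)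
  have "(\<lambda>x. 0) \<in> L" using L(1) by (simp add: is_subspace_of_def)
  then obtain f where f: "f \<in> L" "f \<noteq> (\<lambda>x. 0)" using L(2) by blast
  have fd: "f \<in> dual_space sc tau" using f L(1) by (auto simp: is_subspace_of_def)
  have f0: "f \<noteq> 0" using f by (simp add: zero_fun_def)
  have shL: "sh T j f \<in> L" for j
  proof (induction j)
    case 0 then show ?case using f by simp
  next
    case (Suc j)
    then have "dual_op T (sh T j f) \<in> L" using L(4) by blast
    then show ?case by (simp add: dual_op_sh sh_sh)
  qed
  define N where "N = card F"
  define B where "B = (\<lambda>j. sh T j f) ` {..N}"
  have BF: "B \<subseteq> fs.span F" using shL LF by (auto simp: B_def)
  show ?thesis
  proof (cases "inj_on (\<lambda>j. sh T j f) {..N}")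
    case True
    then have cB: "card B = Suc N" by (simp add: B_def card_image)
    have "fs.dependent B"
    proof (rule ccontr)
      assume "\<not> fs.dependent B"
      then have "card B \<le> card F" using fs.independent_span_bound[OF F(1) _ BF] by blast
      then show False using cB by (simp add: N_def)
    qed
    then obtain u where u: "\<exists>v\<in>B. u v \<noteq> 0" "(\<Sum>v\<in>B. fsc (u v) v) = 0"
      using fs.dependent_finite[of B] by (auto simp: B_def)
    define c where "c j = u (sh T j f)" for j
    have "(\<Sum>v\<in>B. fsc (u v) v) = (\<Sum>j\<le>N. fsc (c j) (sh T j f))"
      unfolding B_def c_def using True by (simp add: sum.reindex)
    then have "\<forall>x. (\<Sum>j\<le>N. c j * f ((T^^j) x)) = 0"
      using u(2) by (auto simp: fun_eq_iff fun_sum_apply fsc_def sh_def)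
    moreover have "\<exists>j\<le>N. c j \<noteq> 0" using u(1) by (auto simp: B_def c_def)
    ultimately show ?thesis using fd f0 by blast
  next
    case False
    then obtain i j where ij: "i \<le> N" "j \<le> N" "i \<noteq> j" "sh T i f = sh T j f"
      unfolding inj_on_def by blast
    define c :: "nat \<Rightarrow> 'k" where "c l = (if l = i then 1 else 0) - (if l = j then 1 else 0)" for l
    have "(\<Sum>l\<le>N. c l * f ((T^^l) x)) = 0" for x
    proof -
      have "(\<Sum>l\<le>N. c l * f ((T^^l) x)) =
          (\<Sum>l\<le>N. if l = i then f ((T^^l) x) else 0) - (\<Sum>l\<le>N. if l = j then f ((T^^l) x) else 0)"
        unfolding sum_subtractf[symmetric] by (intro sum.cong) (auto simp: c_def)
      also have "\<dots> = f ((T^^i) x) - f ((T^^j) x)" using ij by simp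
      also have "\<dots> = 0" using fun_cong[OF ij(4), of x] by (simp add: sh_def)
      finally show ?thesis .
    qed
    moreover have "c i \<noteq> 0" using ij by (simp add: c_def)
    ultimately show ?thesis using fd f0 ij by blast
  qed
qed

end



definition PSd :: "('v \<Rightarrow> complex) \<Rightarrow> ('v \<Rightarrow> 'v) \<Rightarrow> complex poly \<Rightarrow> 'v \<Rightarrow> complex" where
  "PSd g T q x = (\<Sum>i\<le>degree q. coeff q i * g ((T^^i) x))"

lemma PSd_bound:
  assumes "degree q \<le> M"
  shows "PSd g T q x = (\<Sum>i\<le>M. coeff q i * g ((T^^i) x))"
  unfolding PSd_def using assms
  by (intro sum.mono_neutral_left) (auto simp: coeff_eq_0)

lemma PSd_add: "PSd g T (p + q) x = PSd g T p x + PSd g T q x"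
proof -
  define M where "M = max (degree p) (degree q)"
  have "degree (p + q) \<le> M" unfolding M_def by (rule degree_add_le_max)
  then show ?thesis
    by (simp add: PSd_bound[of _ M] M_def sum.distrib distrib_right)
qed

lemma PSd_smult: "PSd g T (smult a p) x = a * PSd g T p x"
  by (simp add: PSd_bound[OF degree_smult_le] PSd_def sum_distrib_left mult.assoc)

lemma PSd_pCons0: "PSd g T (pCons 0 r) x = PSd g T r (T x)"
proof -
  have "degree (pCons 0 r) \<le> Suc (degree r)" by (rule degree_pCons_le)
  then have "PSd g T (pCons 0 r) x = (\<Sum>i\<le>Suc (degree r). coeff (pCons 0 r) i * g ((T^^i) x))"
    by (rule PSd_bound)
  also have "\<dots> = (\<Sum>i\<le>degree r. coeff r i * g ((T^^Suc i) x))"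
    by (subst sum.atMost_Suc_shift) simp
  also have "\<dots> = PSd g T r (T x)"
    unfolding PSd_def by (simp add: funpow_swap1)
  finally show ?thesis .
qed

lemma PSd_diff: "PSd g T (p - q) x = PSd g T p x - PSd g T q x"
proof -
  define M where "M = max (degree p) (degree q)"
  have "degree (p - q) \<le> M" unfolding M_def by (rule degree_diff_le_max)
  then show ?thesis
    by (simp add: PSd_bound[of _ M] M_def sum_subtractf left_diff_distrib)
qed

lemma PSd_lin: "PSd g T ([:-z, 1:] * r) x = PSd g T r (T x) - z * PSd g T r x"
  by (simp add: mult_pCons_left PSd_add PSd_diff PSd_smult PSd_pCons0)

lemma complex_no_trans:
  fixes g :: "'v \<Rightarrow> complex" and T :: "'v \<Rightarrow> 'v" and c :: "nat \<Rightarrow> complex"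
  assumes ts: "topspace tau = UNIV" and Tc: "continuous_map tau tau T"
    and gc: "continuous_map tau euclidean g"
    and rsg: "\<And>t x. g (rs t x) = complex_of_real t * g x"
    and rsT: "\<And>t x. T (rs t x) = rs t (T x)"
    and g0: "g x0 \<noteq> 0"
    and rel: "\<forall>x. (\<Sum>j\<le>N. c j * g ((T^^j) x)) = 0" and cn: "\<exists>j\<le>N. c j \<noteq> 0"
  shows "\<not> transitive_op tau T"
proof
  assume tr: "transitive_op tau T"
  define Q where "Q = {q. q \<noteq> 0 \<and> (\<forall>x. PSd g T q x = 0)}"
  define q0 where "q0 = (\<Sum>j\<le>N. monom (c j) j)"
  have cq0: "coeff q0 i = (if i \<le> N then c i else 0)" for i
    unfolding q0_def coeff_sum coeff_monom by simp
  have "q0 \<noteq> 0" using cn cq0 by (metis coeff_0)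
  moreover have "degree q0 \<le> N" using cq0 by (intro degree_le) auto
  then have "PSd g T q0 x = 0" for x
    using rel by (simp add: PSd_bound[of _ N] cq0)
  ultimately have "q0 \<in> Q" by (simp add: Q_def)
  then have ex: "\<exists>m q. q \<in> Q \<and> degree q = m" by blast
  define m where "m = (LEAST m. \<exists>q. q \<in> Q \<and> degree q = m)"
  obtain q where q: "q \<in> Q" "degree q = m" using LeastI_ex[OF ex] unfolding m_def by blast
  have qmin: "degree q' \<ge> m" if "q' \<in> Q" for q'
    unfolding m_def by (rule Least_le) (use that in blast)
  have qn0: "q \<noteq> 0" and qz: "\<And>x. PSd g T q x = 0" using q by (auto simp: Q_def)
  have "degree q \<noteq> 0"
  proof
    assume d0: "degree q = 0"
    have "PSd g T q x0 = coeff q 0 * g x0" by (simp add: PSd_def d0)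
    moreover have "coeff q 0 \<noteq> 0" using qn0 d0 leading_coeff_neq_0[OF qn0] by simp
    ultimately show False using qz g0 by simp
  qed
  then obtain z where "poly q z = 0" by (metis constant_degree fundamental_theorem_of_algebra)
  then obtain r where qr: "q = [:-z, 1:] * r" using poly_eq_0_iff_dvd by (metis dvdE)
  have rn0: "r \<noteq> 0" using qr qn0 by auto
  have dm: "degree ([:-z, 1:] * r) = degree [:-z, 1:] + degree r"
    by (rule degree_mult_eq) (use rn0 in auto)
  have "degree q = degree [:-z, 1:] + degree r" unfolding qr by (rule dm)
  then have "degree q = Suc (degree r)" by simp
  then have "r \<notin> Q" using qmin q(2) by fastforce
  then obtain x1 where x1: "PSd g T r x1 \<noteq> 0" using rn0 by (auto simp: Q_def)
  define h where "h = PSd g T r"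
  have hT: "h (T x) = z * h x" for x
  proof -
    have "PSd g T r (T x) - z * PSd g T r x = 0" using qz[of x] unfolding qr PSd_lin .
    then show ?thesis by (simp add: h_def)
  qed
  have hTn: "h ((T^^n) x) = z^n * h x" for n x
    by (induction n) (auto simp: hT)
  have Tn_rs: "(T^^i) (rs t x) = rs t ((T^^i) x)" for i t x
    by (induction i) (auto simp: rsT)
  have hrs: "h (rs t x) = complex_of_real t * h x" for t x
    unfolding h_def PSd_def by (simp add: Tn_rs rsg sum_distrib_left algebra_simps)
  have cm_iter: "continuous_map tau tau (T^^i)" for i
  proof (induction i)
    case 0 then show ?case by (simp add: ts)
  next
    case (Suc i)
    have "continuous_map tau tau (T \<circ> (T^^i))" by (rule continuous_map_compose[OF Suc.IH Tc])
    then show ?case by (simp only: funpow.simps)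
  qed
  have hc: "continuous_map tau euclidean h"
    unfolding h_def PSd_def
  proof (intro continuous_map_sum)
    fix i
    have c1: "continuous_map tau euclidean (g \<circ> (T^^i))" by (rule continuous_map_compose[OF cm_iter gc])
    have "continuous_map euclidean euclidean (\<lambda>w::complex. coeff r i * w)"
      by (simp add: continuous_map_iff_continuous2 continuous_on_mult_left continuous_on_id)
    from continuous_map_compose[OF c1 this]
    show "continuous_map tau euclidean (\<lambda>x. coeff r i * g ((T ^^ i) x))" by (simp add: comp_def)
  qed simp
  define U where "U = {x. cmod (h x) < 1}"
  define V where "V = {x. cmod (h x) > 2}"
  have oU: "openin tau U"
  proof -
    have "openin tau {x \<in> topspace tau. h x \<in> ball 0 1}"
      by (rule openin_continuous_map_preimage[OF hc]) simp
    then show ?thesis by (simp add: U_def ts)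
  qed
  have oV: "openin tau V"
  proof -
    have "openin tau {x \<in> topspace tau. h x \<in> - cball 0 2}"
      by (rule openin_continuous_map_preimage[OF hc]) auto
    then show ?thesis by (simp add: V_def ts not_le)
  qed
  have neU: "rs 0 x1 \<in> U" by (simp add: U_def hrs)
  define t where "t = 3 / cmod (h x1)"
  have hx1: "cmod (h x1) > 0" using x1 by (simp add: h_def)
  have "cmod (h (rs t x1)) = \<bar>t\<bar> * cmod (h x1)" by (simp add: hrs norm_mult)
  also have "\<dots> = 3" using hx1 by (simp add: t_def)
  finally have "cmod (h (rs t x1)) = 3" .
  then have neV: "rs t x1 \<in> V" by (simp add: V_def)
  obtain n x where n: "n \<ge> 1" "x \<in> U" "(T^^n) x \<in> V"
    using tr oU oV neU neV unfolding transitive_op_def by blast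
  have gt: "cmod z > 1"
  proof (rule ccontr)
    assume "\<not> cmod z > 1"
    then have "cmod z ^ n \<le> 1" by (simp add: power_le_one)
    then have "cmod z ^ n * cmod (h x) \<le> cmod (h x)" by (simp add: mult_left_le_one_le)
    moreover have "cmod (h ((T^^n) x)) = cmod z ^ n * cmod (h x)" by (simp add: hTn norm_mult norm_power)
    ultimately show False using n by (simp add: U_def V_def)
  qed
  obtain m y where m: "m \<ge> 1" "y \<in> V" "(T^^m) y \<in> U"
    using tr oU oV neU neV unfolding transitive_op_def by blast
  have "cmod z ^ m \<ge> 1" using gt by (simp add: one_le_power)
  then have "cmod z ^ m * cmod (h y) \<ge> cmod (h y)" by (simp add: mult_le_cancel_right1)
  moreover have "cmod (h ((T^^m) y)) = cmod z ^ m * cmod (h y)" by (simp add: hTn norm_mult norm_power)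
  ultimately show False using m by (simp add: U_def V_def)
qed


lemma cycle:
  fixes sc :: "'k::real_normed_field \<Rightarrow> 'v::ab_group_add \<Rightarrow> 'v"
  assumes H: "Hausdorff_tvs sc tau" and W: "weak_topology sc tau"
    and Tl: "Vector_Spaces.linear sc sc T" and Tc: "continuous_map tau tau T"
    and t21: "transitive_op tau T \<Longrightarrow> dual_has_no_nontrivial_fd_invariant_subspace sc tau T"
  shows "equivalences_hold sc tau T"
proof -
  have vs: "vector_space sc" and ts: "topspace tau = UNIV" using H by (simp_all add: Hausdorff_tvs_def)
  have 14: "dual_has_no_nontrivial_fd_invariant_subspace sc tau T \<Longrightarrow> poly_mixing_op sc tau T"
    by (rule one_imp_four[OF vs ts Tl Tc W])
  have 43: "poly_mixing_op sc tau T \<Longrightarrow> mixing_op tau T" by (rule four_imp_three[OF vs ts Tl Tc])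
  have 32: "mixing_op tau T \<Longrightarrow> transitive_op tau T" by (rule three_imp_two[OF vs ts Tl Tc])
  show ?thesis unfolding equivalences_hold_def using 14 43 32 t21 by blast
qed

lemma real_t21:
  fixes sc :: "real \<Rightarrow> 'v::ab_group_add \<Rightarrow> 'v"
  assumes H: "Hausdorff_tvs sc tau"
    and Tl: "Vector_Spaces.linear sc sc T" and Tc: "continuous_map tau tau T"
    and tr: "transitive_op tau T"
  shows "dual_has_no_nontrivial_fd_invariant_subspace sc tau T"
proof (rule ccontr)
  assume nd: "\<not> dual_has_no_nontrivial_fd_invariant_subspace sc tau T"
  have vs: "vector_space sc" and ts: "topspace tau = UNIV" using H by (simp_all add: Hausdorff_tvs_def)
  obtain f N c where f: "f \<in> dual_space sc tau" "f \<noteq> 0" "\<exists>j\<le>N. c j \<noteq> 0"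
    "\<forall>x. (\<Sum>j\<le>N. c j * f ((T^^j) x)) = 0"
    using not_one_rel[OF vs ts Tl Tc nd] by blast
  have fl: "Vector_Spaces.linear sc (*) f" and fc: "continuous_map tau euclidean f"
    using f(1) by (auto simp: dual_space_def)
  obtain x0 where x0: "f x0 \<noteq> 0" using f(2) by (auto simp: fun_eq_iff)
  have "\<not> transitive_op tau T"
  proof (rule complex_no_trans[where g = "\<lambda>x. complex_of_real (f x)" and rs = sc])
    show "topspace tau = UNIV" by (rule ts)
    show "continuous_map tau tau T" by (rule Tc)
    have "continuous_map euclidean euclidean (complex_of_real)"
      by (simp add: continuous_map_iff_continuous2 continuous_on_of_real continuous_on_id)
    from continuous_map_compose[OF fc this]
    show "continuous_map tau euclidean (\<lambda>x. complex_of_real (f x))" by (simp add: comp_def)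
    show "complex_of_real (f (sc t x)) = complex_of_real t * complex_of_real (f x)" for t x
      by (simp add: lin_scale[OF fl])
    show "T (sc t x) = sc t (T x)" for t x using Tl by (simp add: Vector_Spaces.linear_iff)
    show "complex_of_real (f x0) \<noteq> 0" using x0 by simp
    show "\<forall>x. (\<Sum>j\<le>N. complex_of_real (c j) * complex_of_real (f ((T ^^ j) x))) = 0"
    proof
      fix x
      have "(\<Sum>j\<le>N. complex_of_real (c j) * complex_of_real (f ((T ^^ j) x)))
          = complex_of_real (\<Sum>j\<le>N. c j * f ((T ^^ j) x))" by simp
      then show "(\<Sum>j\<le>N. complex_of_real (c j) * complex_of_real (f ((T ^^ j) x))) = 0"
        using f(4) by simp
    qed
    show "\<exists>j\<le>N. complex_of_real (c j) \<noteq> 0" using f(3) by simp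
  qed
  then show False using tr by simp
qed

lemma complex_t21:
  fixes sc :: "complex \<Rightarrow> 'v::ab_group_add \<Rightarrow> 'v"
  assumes H: "Hausdorff_tvs sc tau"
    and Tl: "Vector_Spaces.linear sc sc T" and Tc: "continuous_map tau tau T"
    and tr: "transitive_op tau T"
  shows "dual_has_no_nontrivial_fd_invariant_subspace sc tau T"
proof (rule ccontr)
  assume nd: "\<not> dual_has_no_nontrivial_fd_invariant_subspace sc tau T"
  have vs: "vector_space sc" and ts: "topspace tau = UNIV" using H by (simp_all add: Hausdorff_tvs_def)
  obtain f N c where f: "f \<in> dual_space sc tau" "f \<noteq> 0" "\<exists>j\<le>N. c j \<noteq> 0"
    "\<forall>x. (\<Sum>j\<le>N. c j * f ((T^^j) x)) = 0"
    using not_one_rel[OF vs ts Tl Tc nd] by blast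
  have fl: "Vector_Spaces.linear sc (*) f" and fc: "continuous_map tau euclidean f"
    using f(1) by (auto simp: dual_space_def)
  obtain x0 where x0: "f x0 \<noteq> 0" using f(2) by (auto simp: fun_eq_iff)
  have "\<not> transitive_op tau T"
  proof (rule complex_no_trans[where g = f and rs = "\<lambda>t. sc (complex_of_real t)"])
    show "topspace tau = UNIV" by (rule ts)
    show "continuous_map tau tau T" by (rule Tc)
    show "continuous_map tau euclidean f" by (rule fc)
    show "f (sc (complex_of_real t) x) = complex_of_real t * f x" for t x
      by (simp add: lin_scale[OF fl])
    show "T (sc (complex_of_real t) x) = sc (complex_of_real t) (T x)" for t x
      using Tl by (simp add: Vector_Spaces.linear_iff)
    show "f x0 \<noteq> 0" by (rule x0)
    show "\<forall>x. (\<Sum>j\<le>N. c j * f ((T ^^ j) x)) = 0" by (rule f(4))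
    show "\<exists>j\<le>N. c j \<noteq> 0" by (rule f(3))
  qed
  then show False using tr by simp
qed

theorem theorem1p1:
  shows
  "(\<forall>(sc :: real \<Rightarrow> 'a::ab_group_add \<Rightarrow> 'a) tau T.
      Hausdorff_tvs sc tau \<and> weak_topology sc tau \<and>
      Vector_Spaces.linear sc sc T \<and> continuous_map tau tau T
      \<longrightarrow> equivalences_hold sc tau T) \<and>
   (\<forall>(sc :: complex \<Rightarrow> 'b::ab_group_add \<Rightarrow> 'b) tau T.
      Hausdorff_tvs sc tau \<and> weak_topology sc tau \<and>
      Vector_Spaces.linear sc sc T \<and> continuous_map tau tau T
      \<longrightarrow> equivalences_hold sc tau T)"
proof (intro conjI allI impI)
  fix sc :: "real \<Rightarrow> 'a \<Rightarrow> 'a" and tau T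
  assume A: "Hausdorff_tvs sc tau \<and> weak_topology sc tau \<and> Vector_Spaces.linear sc sc T \<and> continuous_map tau tau T"
  show "equivalences_hold sc tau T"
    using A by (intro cycle real_t21) auto
next
  fix sc :: "complex \<Rightarrow> 'b \<Rightarrow> 'b" and tau T
  assume A: "Hausdorff_tvs sc tau \<and> weak_topology sc tau \<and> Vector_Spaces.linear sc sc T \<and> continuous_map tau tau T"
  show "equivalences_hold sc tau T"
    using A by (intro cycle complex_t21) auto
qed

end
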